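(* Let $p_1,p_2,p_3$ be distinct primes and $n_1,n_2,n_3$ be positive integers. Then $$\sum_{i=1}^3\frac{p_i^{n_i+1}-p_i}{p_i-1}\leq\frac{1}{2}\prod_{i=1}^3p_i^{n_i}.$$ *)

theory Defs
  imports Complex_Main "HOL-Computational_Algebra.Primes"
begin

end

theory Submission
  imports Defs
begin

lemma ineq_sorted:
  fixes a b c :: nat
  assumes "2 \<le> a" "a < b" "b < c"
  shows "4*(a+b+c) \<le> a*b*c + 12"
proof -
  define u where "u = a - 2"
  define v where "v = b - 3"
  define w where "w = c - 4"
  have "a = 2+u" "b = 3+v" "c = 4+w" using assms unfolding u_def v_def w_def by auto
  thus ?thesis by (simp add: algebra_simps)
qed

lemma ineq_all:
  fixes a b c :: nat
  assumes "2 \<le> a" "2 \<le> b" "2 \<le> c" "a \<noteq> b" "a \<noteq> c" "b \<noteq> c"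
  shows "4*(a+b+c) \<le> a*b*c + 12"
proof -
  have "a < b \<and> b < c \<or> a < c \<and> c < b \<or> b < a \<and> a < c \<or> b < c \<and> c < a
        \<or> c < a \<and> a < b \<or> c < b \<and> b < a" using assms by linarith
  thus ?thesis using assms ineq_sorted[of a b c] ineq_sorted[of a c b] ineq_sorted[of b a c]
      ineq_sorted[of b c a] ineq_sorted[of c a b] ineq_sorted[of c b a]
    by (auto simp: algebra_simps)
qed

lemma pow_ne:
  fixes p q :: nat
  assumes "prime p" "prime q" "p \<noteq> q" "n \<ge> 1" "m \<ge> 1"
  shows "p ^ n \<noteq> q ^ m"
proof
  assume h: "p ^ n = q ^ m"
  have "p dvd p ^ n" using assms(4) by (simp add: dvd_power)
  hence "p dvd q ^ m" using h by simp
  hence "p dvd q" using assms(1) prime_dvd_power by blast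
  thus False using assms primes_dvd_imp_eq by blast
qed

lemma pge:
  fixes p :: nat
  assumes "prime p" "n \<ge> 1"
  shows "2 \<le> p ^ n"
proof -
  have "2 \<le> p" using prime_ge_2_nat[OF assms(1)] .
  moreover have "p \<le> p ^ n" using self_le_power[of p n] assms(2) calculation by simp
  ultimately show ?thesis by linarith
qed

lemma term_bound:
  fixes p :: nat
  assumes "prime p" "n \<ge> 1"
  shows "(real p ^ (n + 1) - real p) / (real p - 1) \<le> 2 * (real (p ^ n) - 1)"
proof -
  have p2: "real p \<ge> 2" using prime_ge_2_nat[OF assms(1)] by simp
  have x1: "real p ^ n \<ge> 1" using p2 by (simp add: one_le_power)
  have "real p ^ (n + 1) - real p = real p * (real p ^ n - 1)" by (simp add: algebra_simps)
  moreover have "real p * (real p ^ n - 1) \<le> 2 * (real p ^ n - 1) * (real p - 1)"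
  proof -
    have "real p \<le> 2 * (real p - 1)" using p2 by simp
    from mult_right_mono[OF this, of "real p ^ n - 1"] x1 show ?thesis by (simp add: algebra_simps)
  qed
  ultimately show ?thesis using p2 by (simp add: pos_divide_le_eq)
qed

theorem lemma2p3:
  fixes p :: "nat \<Rightarrow> nat" and n :: "nat \<Rightarrow> nat"
  assumes "\<And>i. i \<in> {1,2,3} \<Longrightarrow> prime (p i)"
    and "inj_on p {1,2,3}"
    and "\<And>i. i \<in> {1,2,3} \<Longrightarrow> n i \<ge> 1"
  shows "(\<Sum>i=1..3. (real (p i) ^ (n i + 1) - real (p i)) / (real (p i) - 1))
           \<le> (1/2) * (\<Prod>i=1..3. real (p i) ^ n i)"
proof -
  have P: "prime (p 1)" "prime (p 2)" "prime (p 3)" using assms(1) by auto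
  have N: "n 1 \<ge> 1" "n 2 \<ge> 1" "n 3 \<ge> 1" using assms(3) by auto
  have D: "p 1 \<noteq> p 2" "p 1 \<noteq> p 3" "p 2 \<noteq> p 3" using assms(2)
    by (auto simp: inj_on_def)
  define a where "a = p 1 ^ n 1"
  define b where "b = p 2 ^ n 2"
  define c where "c = p 3 ^ n 3"
  have ge: "2 \<le> a" "2 \<le> b" "2 \<le> c" unfolding a_def b_def c_def
    using P N pge by auto
  have ne: "a \<noteq> b" "a \<noteq> c" "b \<noteq> c" unfolding a_def b_def c_def
    using pow_ne P N D by auto
  have key: "4*(a+b+c) \<le> a*b*c + 12" using ineq_all ge ne by blast
  hence keyr: "4*(real a + real b + real c) \<le> real a * real b * real c + 12"
    by (metis (mono_tags) of_nat_add of_nat_le_iff of_nat_mult of_nat_numeral)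
  have "(\<Sum>i=1..3. (real (p i) ^ (n i + 1) - real (p i)) / (real (p i) - 1))
     = (real (p 1) ^ (n 1 + 1) - real (p 1)) / (real (p 1) - 1)
     + (real (p 2) ^ (n 2 + 1) - real (p 2)) / (real (p 2) - 1)
     + (real (p 3) ^ (n 3 + 1) - real (p 3)) / (real (p 3) - 1)"
    by (simp add: numeral_3_eq_3 numeral_2_eq_2)
  also have "\<dots> \<le> 2 * (real a - 1) + 2 * (real b - 1) + 2 * (real c - 1)"
    unfolding a_def b_def c_def using term_bound P N by (meson add_mono)
  also have "\<dots> \<le> (1/2) * (real a * real b * real c)" using keyr by simp
  also have "\<dots> = (1/2) * (\<Prod>i=1..3. real (p i) ^ n i)"
    unfolding a_def b_def c_def by (simp add: numeral_3_eq_3 numeral_2_eq_2)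
  finally show ?thesis .
qed

end
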